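(* Let $k$ be a kernel on a space $\mathcal X$, let $x_1,\dots,x_n \in \mathcal X$, let $\hat{\mathbb P}_n = \frac1n\sum_i\delta_{x_i}$, and let $K$ be the kernel matrix $K_{ij} = k(x_i,x_j)$, assumed invertible. Let $\ell_f:\mathcal X\to\mathbb R$ and let $\vec\ell \in \mathbb R^n$ have entries $\vec\ell_i = \ell_f(x_i)$. Let $\epsilon>0$ and consider the problem $$\sup_{w\in\mathbb R^n} \sum_{i=1}^n w_i \ell_f(x_i) \quad\text{s.t.}\quad d_{\mathrm{MMD}}\Big(\sum_{i=1}^n w_i\delta_{x_i}, \hat{\mathbb P}_n\Big) \leq \epsilon,\ \ \sum_{i=1}^n w_i = 1,\ \ w_i \geq 0\ \forall i.$$ If $\epsilon$ is small enough that the constraints $w_i \geq 0$ are not active, then the optimal value of this problem is $$\mathbb{E}_{x\sim\hat{\mathbb P}_n}[\ell_f(x)] + \epsilon\sqrt{\vec\ell^T K^{-1}\vec\ell - \frac{(\vec\ell^T K^{-1}\mathbf 1)^2}{\mathbf 1^T K^{-1}\mathbf 1}}.$$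
   Context: For weights $w$, $d_{\mathrm{MMD}}(\sum_i w_i\delta_{x_i},\hat{\mathbb P}_n) = \|\sum_i (w_i - \tfrac1n) k(x_i,\cdot)\|_{\mathcal H}$, so its square equals $(w-\frac1n\mathbf 1)^T K (w - \frac1n\mathbf 1)$. "The constraints $w_i\ge 0$ are not active" means the optimal value is unchanged when these constraints are dropped. $\mathbf 1$ is the all-ones vector and $\mathbb{E}_{x\sim\hat{\mathbb P}_n}[\ell_f(x)] = \frac1n\sum_i \ell_f(x_i)$. *)

theory Defs
  imports "HOL-Analysis.Analysis"
begin

definition is_kernel :: "('a \<Rightarrow> 'a \<Rightarrow> real) \<Rightarrow> bool" where
  "is_kernel k \<longleftrightarrow> (\<forall>x y. k x y = k y x) \<and>
     (\<forall>(xs::'a list) (c::nat \<Rightarrow> real).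
        0 \<le> (\<Sum>i<length xs. \<Sum>j<length xs. c i * c j * k (xs ! i) (xs ! j)))"

definition kernel_matrix :: "('a \<Rightarrow> 'a \<Rightarrow> real) \<Rightarrow> ('n::finite \<Rightarrow> 'a) \<Rightarrow> real^'n^'n" where
  "kernel_matrix k x = (\<chi> i j. k (x i) (x j))"

text \<open>MMD between sum_i w_i delta_{x_i} and the empirical measure (1/n) sum_i delta_{x_i}:
  the RKHS norm of sum_i (w_i - 1/n) k(x_i,.), i.e. sqrt of (w - 1/n 1)^T K (w - 1/n 1).\<close>
definition d_mmd :: "('a \<Rightarrow> 'a \<Rightarrow> real) \<Rightarrow> ('n::finite \<Rightarrow> 'a) \<Rightarrow> real^'n \<Rightarrow> real" where
  "d_mmd k x w = (let v = w - (\<chi> i. 1 / real CARD('n)) in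
                  sqrt (v \<bullet> (kernel_matrix k x *v v)))"

definition feas_relaxed :: "('a \<Rightarrow> 'a \<Rightarrow> real) \<Rightarrow> ('n::finite \<Rightarrow> 'a) \<Rightarrow> real \<Rightarrow> (real^'n) set" where
  "feas_relaxed k x \<epsilon> = {w. d_mmd k x w \<le> \<epsilon> \<and> (\<Sum>i\<in>UNIV. w $ i) = 1}"

definition feas :: "('a \<Rightarrow> 'a \<Rightarrow> real) \<Rightarrow> ('n::finite \<Rightarrow> 'a) \<Rightarrow> real \<Rightarrow> (real^'n) set" where
  "feas k x \<epsilon> = {w. d_mmd k x w \<le> \<epsilon> \<and> (\<Sum>i\<in>UNIV. w $ i) = 1 \<and> (\<forall>i. 0 \<le> w $ i)}"

definition objective :: "('a \<Rightarrow> real) \<Rightarrow> ('n::finite \<Rightarrow> 'a) \<Rightarrow> real^'n \<Rightarrow> real" where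
  "objective l x w = (\<Sum>i\<in>UNIV. w $ i * l (x i))"

end

theory Submission
  imports Defs
begin

lemma sym_dot:
  fixes A :: "real^'n^'n"
  assumes "transpose A = A"
  shows "a \<bullet> (A *v b) = b \<bullet> (A *v a)"
proof -
  have "a \<bullet> (A *v b) = (a v* A) \<bullet> b" by (simp add: dot_lmul_matrix)
  also have "a v* A = transpose A *v a" by simp
  finally show ?thesis using assms by (simp add: inner_commute)
qed

lemma psd_vec:
  fixes k :: "'a \<Rightarrow> 'a \<Rightarrow> real" and x :: "'n::finite \<Rightarrow> 'a"
  assumes "is_kernel k"
  shows "0 \<le> c \<bullet> (kernel_matrix k x *v c)"
proof -
  obtain xs :: "'n list" where d: "distinct xs" and s: "set xs = UNIV"
    using finite_distinct_list[of "UNIV::'n set"] by auto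
  have bij: "bij_betw ((!) xs) {..<length xs} UNIV"
    using bij_betw_nth[OF d refl] s by simp
  define cc where "cc = (\<lambda>i. c $ (xs ! i))"
  have "0 \<le> (\<Sum>i<length xs. \<Sum>j<length xs. cc i * cc j * k (map x xs ! i) (map x xs ! j))"
  proof -
    have "\<forall>(ys::'a list) (c::nat \<Rightarrow> real). 0 \<le> (\<Sum>i<length ys. \<Sum>j<length ys. c i * c j * k (ys ! i) (ys ! j))"
      using assms unfolding is_kernel_def by blast
    then have "0 \<le> (\<Sum>i<length (map x xs). \<Sum>j<length (map x xs). cc i * cc j * k (map x xs ! i) (map x xs ! j))"
      by blast
    then show ?thesis by simp
  qed
  also have "\<dots> = (\<Sum>i<length xs. \<Sum>j<length xs. c $ (xs ! i) * c $ (xs ! j) * k (x (xs ! i)) (x (xs ! j)))"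
    by (simp add: cc_def)
  also have "\<dots> = (\<Sum>i<length xs. \<Sum>j\<in>UNIV. c $ (xs ! i) * c $ j * k (x (xs ! i)) (x j))"
    by (intro sum.cong refl sum.reindex_bij_betw[OF bij])
  also have "\<dots> = (\<Sum>i\<in>UNIV. \<Sum>j\<in>UNIV. c $ i * c $ j * k (x i) (x j))"
    by (rule sum.reindex_bij_betw[OF bij])
  also have "\<dots> = c \<bullet> (kernel_matrix k x *v c)"
    unfolding kernel_matrix_def inner_vec_def matrix_vector_mult_def
    by (simp add: sum_distrib_left mult_ac)
  finally show ?thesis .
qed


lemma expand_quad:
  fixes K :: "real^'n^'n"
  assumes "transpose K = K"
  shows "(y + s *\<^sub>R z) \<bullet> (K *v (y + s *\<^sub>R z)) = y \<bullet> (K *v y) + 2 * s * (y \<bullet> (K *v z)) + s\<^sup>2 * (z \<bullet> (K *v z))"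
proof -
  have "z \<bullet> (K *v y) = y \<bullet> (K *v z)" using sym_dot[OF assms] by metis
  then show ?thesis
    by (simp add: matrix_vector_right_distrib matrix_vector_mult_scaleR inner_add_left inner_add_right
        algebra_simps power2_eq_square)
qed

lemma quad_zero:
  fixes K :: "real^'n^'n"
  assumes sym: "transpose K = K" and psd: "\<And>c. 0 \<le> c \<bullet> (K *v c)" and z: "z \<bullet> (K *v z) = 0"
  shows "y \<bullet> (K *v z) = 0"
proof (rule ccontr)
  assume ne: "y \<bullet> (K *v z) \<noteq> 0"
  define s where "s = - (y \<bullet> (K *v y) + 1) / (2 * (y \<bullet> (K *v z)))"
  have "0 \<le> (y + s *\<^sub>R z) \<bullet> (K *v (y + s *\<^sub>R z))" by (rule psd)
  also have "\<dots> = y \<bullet> (K *v y) + 2 * s * (y \<bullet> (K *v z))"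
    using expand_quad[OF sym] z by simp
  also have "\<dots> = -1" using ne by (simp add: s_def field_simps)
  finally show False by simp
qed

lemma cs_quad:
  fixes K :: "real^'n^'n"
  assumes sym: "transpose K = K" and psd: "\<And>c. 0 \<le> c \<bullet> (K *v c)"
  shows "(y \<bullet> (K *v z))\<^sup>2 \<le> (y \<bullet> (K *v y)) * (z \<bullet> (K *v z))"
proof (cases "z \<bullet> (K *v z) = 0")
  case True
  then show ?thesis using quad_zero[OF sym psd True, of y] psd[of y] by simp
next
  case False
  define b where "b = z \<bullet> (K *v z)"
  have bpos: "b > 0" using psd[of z] False b_def by simp
  define s where "s = - (y \<bullet> (K *v z)) / b"
  have "0 \<le> (y + s *\<^sub>R z) \<bullet> (K *v (y + s *\<^sub>R z))" by (rule psd)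
  also have "\<dots> = y \<bullet> (K *v y) + 2 * s * (y \<bullet> (K *v z)) + s\<^sup>2 * b"
    using expand_quad[OF sym] b_def by simp
  also have "\<dots> = y \<bullet> (K *v y) - (y \<bullet> (K *v z))\<^sup>2 / b"
    using bpos by (simp add: s_def field_simps power2_eq_square)
  finally have "(y \<bullet> (K *v z))\<^sup>2 / b \<le> y \<bullet> (K *v y)" by simp
  then show ?thesis using bpos b_def by (simp add: divide_le_eq)
qed

lemma sqrt_le_iff_sq:
  assumes "0 \<le> (e::real)"
  shows "(sqrt q \<le> e) = (q \<le> e\<^sup>2)"
  using assms by (metis abs_of_nonneg real_sqrt_abs real_sqrt_le_iff)

theorem lemma3:
  fixes k :: "'a \<Rightarrow> 'a \<Rightarrow> real" and x :: "'n::finite \<Rightarrow> 'a"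
    and l :: "'a \<Rightarrow> real" and \<epsilon> :: real
  assumes "is_kernel k"
    and "invertible (kernel_matrix k x)"
    and "\<epsilon> > 0"
    and inactive: "(SUP w\<in>feas k x \<epsilon>. objective l x w) = (SUP w\<in>feas_relaxed k x \<epsilon>. objective l x w)"
  shows "(SUP w\<in>feas k x \<epsilon>. objective l x w) =
     (\<Sum>i\<in>UNIV. l (x i)) / real CARD('n) +
     \<epsilon> * sqrt (let Ki = matrix_inv (kernel_matrix k x); lv = (\<chi> i. l (x i)); one = ((\<chi> i. 1) :: real^'n) in
        lv \<bullet> (Ki *v lv) - (lv \<bullet> (Ki *v one))\<^sup>2 / (one \<bullet> (Ki *v one)))"
proof -
  define K where "K = kernel_matrix k x"
  define M where "M = matrix_inv K"
  define L where "L = ((\<chi> i. l (x i)) :: real^'n)"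
  define one where "one = ((\<chi> i. 1) :: real^'n)"
  define u where "u = ((\<chi> i. 1 / real CARD('n)) :: real^'n)"
  have psd: "\<And>c. 0 \<le> c \<bullet> (K *v c)" unfolding K_def using psd_vec[OF assms(1)] .
  have symK: "transpose K = K"
    using assms(1) unfolding K_def kernel_matrix_def is_kernel_def transpose_def
    by (simp add: vec_eq_iff)
  have KM: "K ** M = mat 1 \<and> M ** K = mat 1"
    using assms(2) unfolding invertible_def matrix_inv_def M_def K_def by (rule someI_ex)
  have KMv: "\<And>y. K *v (M *v y) = y"
    using KM by (simp add: matrix_vector_mul_assoc)
  have symM: "\<And>a b. a \<bullet> (M *v b) = b \<bullet> (M *v a)"
  proof -
    fix a b
    have "a \<bullet> (M *v b) = (K *v (M *v a)) \<bullet> (M *v b)" by (simp add: KMv)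
    also have "\<dots> = (M *v b) \<bullet> (K *v (M *v a))" by (simp add: inner_commute)
    also have "\<dots> = (M *v a) \<bullet> (K *v (M *v b))" by (rule sym_dot[OF symK])
    also have "\<dots> = b \<bullet> (M *v a)" by (simp add: KMv inner_commute)
    finally show "a \<bullet> (M *v b) = b \<bullet> (M *v a)" .
  qed
  have ncard: "real CARD('n) > 0" by simp
  have one_one: "one \<bullet> one = real CARD('n)"
    unfolding one_def inner_vec_def by simp
  define a where "a = L \<bullet> (M *v one)"
  define b where "b = one \<bullet> (M *v one)"
  have bpos: "b \<noteq> 0"
  proof
    assume b0: "b = 0"
    have "(M *v one) \<bullet> (K *v (M *v one)) = 0" using b0 unfolding b_def by (simp add: KMv inner_commute)
    from quad_zero[OF symK psd this, of one] have "one \<bullet> one = 0" by (simp add: KMv)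
    with one_one ncard show False by simp
  qed
  define t where "t = a / b"
  define r where "r = L - t *\<^sub>R one"
  define g where "g = M *v r"
  define G where "G = g \<bullet> (K *v g)"
  have Kg: "K *v g = r" unfolding g_def by (rule KMv)
  have G_r: "G = r \<bullet> (M *v r)" by (simp add: G_def g_def KMv inner_commute)
  have G_eq: "G = L \<bullet> (M *v L) - a\<^sup>2 / b"
  proof -
    have "one \<bullet> (M *v L) = a" unfolding a_def by (rule symM)
    then have "G = L \<bullet> (M *v L) - 2 * t * a + t\<^sup>2 * b"
      unfolding G_r r_def a_def b_def
      by (simp add: matrix_vector_right_distrib matrix_vector_mult_scaleR inner_diff_left inner_diff_right
        algebra_simps power2_eq_square matrix_vector_mult_diff_distrib)
    then show ?thesis using bpos by (simp add: t_def field_simps power2_eq_square)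
  qed
  have G_nn: "0 \<le> G" unfolding G_def by (rule psd)
  have one_g: "one \<bullet> g = 0"
  proof -
    have "one \<bullet> g = r \<bullet> (M *v one)" unfolding g_def by (rule symM)
    also have "\<dots> = a - t * b" unfolding r_def a_def b_def by (simp add: inner_diff_left)
    also have "\<dots> = 0" using bpos by (simp add: t_def)
    finally show ?thesis .
  qed
  have sum_one: "\<And>w::real^'n. (\<Sum>i\<in>UNIV. w $ i) = one \<bullet> w"
    unfolding one_def inner_vec_def by simp
  have obj: "\<And>w. objective l x w = w \<bullet> L"
    unfolding objective_def L_def inner_vec_def by simp
  have uL: "u \<bullet> L = (\<Sum>i\<in>UNIV. l (x i)) / real CARD('n)"
    unfolding u_def L_def inner_vec_def by (simp add: sum_divide_distrib)
  have one_u: "one \<bullet> u = 1"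
    unfolding u_def one_def inner_vec_def using ncard by simp
  have dmmd: "\<And>w. d_mmd k x w = sqrt ((w - u) \<bullet> (K *v (w - u)))"
    unfolding d_mmd_def u_def K_def Let_def by simp
  have feasR: "\<And>w. w \<in> feas_relaxed k x \<epsilon> \<longleftrightarrow> (w - u) \<bullet> (K *v (w - u)) \<le> \<epsilon>\<^sup>2 \<and> one \<bullet> w = 1"
    unfolding feas_relaxed_def using sqrt_le_iff_sq[of \<epsilon>] assms(3) by (simp add: dmmd sum_one)
  define V where "V = u \<bullet> L + \<epsilon> * sqrt G"
  have Lr: "\<And>v. one \<bullet> v = 0 \<Longrightarrow> v \<bullet> L = v \<bullet> r"
    unfolding r_def by (simp add: inner_diff_right inner_commute)
  have upper: "objective l x w \<le> V" if "w \<in> feas_relaxed k x \<epsilon>" for w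
  proof -
    define v where "v = w - u"
    have q: "v \<bullet> (K *v v) \<le> \<epsilon>\<^sup>2" and ov: "one \<bullet> v = 0"
      using that one_u unfolding feasR v_def by (auto simp: inner_diff_right)
    have "v \<bullet> L = v \<bullet> (K *v g)" using Lr[OF ov] Kg by simp
    also have "\<dots> \<le> \<epsilon> * sqrt G"
    proof -
      have "(v \<bullet> (K *v g))\<^sup>2 \<le> (v \<bullet> (K *v v)) * G" unfolding G_def by (rule cs_quad[OF symK psd])
      also have "\<dots> \<le> \<epsilon>\<^sup>2 * G" using q G_nn by (simp add: mult_right_mono)
      finally have "(v \<bullet> (K *v g))\<^sup>2 \<le> (\<epsilon> * sqrt G)\<^sup>2"
        using G_nn by (simp add: power_mult_distrib)
      moreover have "0 \<le> \<epsilon> * sqrt G" using assms(3) G_nn by simp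
      ultimately show ?thesis by (rule power2_le_imp_le)
    qed
    finally have "v \<bullet> L \<le> \<epsilon> * sqrt G" .
    moreover have "w = u + v" unfolding v_def by simp
    ultimately show ?thesis unfolding obj V_def by (simp add: inner_add_left)
  qed
  define v0 where "v0 = (if G = 0 then 0 else (\<epsilon> / sqrt G) *\<^sub>R g)"
  have attain: "u + v0 \<in> feas_relaxed k x \<epsilon> \<and> objective l x (u + v0) = V"
  proof (cases "G = 0")
    case True
    then show ?thesis unfolding feasR obj V_def v0_def using one_u by simp
  next
    case False
    then have Gp: "G > 0" using G_nn by simp
    have ov0: "one \<bullet> v0 = 0" using False one_g unfolding v0_def by simp
    have "v0 \<bullet> (K *v v0) = (\<epsilon> / sqrt G)\<^sup>2 * G"
      using False unfolding v0_def G_def by (simp add: matrix_vector_mult_scaleR power2_eq_square)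
    also have "\<dots> = \<epsilon>\<^sup>2" using Gp by (simp add: power_divide)
    finally have q0: "v0 \<bullet> (K *v v0) = \<epsilon>\<^sup>2" .
    have "v0 \<bullet> L = v0 \<bullet> r" by (rule Lr[OF ov0])
    also have "\<dots> = (\<epsilon> / sqrt G) * G" using False unfolding v0_def G_def Kg by simp
    also have "\<dots> = \<epsilon> * sqrt G" using Gp by (simp add: field_simps real_sqrt_mult_self flip: power2_eq_square)
    finally have "v0 \<bullet> L = \<epsilon> * sqrt G" .
    then show ?thesis unfolding feasR obj V_def using q0 ov0 one_u
      by (simp add: inner_add_left inner_add_right)
  qed
  have supR: "(SUP w\<in>feas_relaxed k x \<epsilon>. objective l x w) = V"
    using attain upper by (intro cSup_eq_maximum) auto
  have Sexpr: "(let Ki = matrix_inv (kernel_matrix k x); lv = (\<chi> i. l (x i)); one = ((\<chi> i. 1) :: real^'n) in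
        lv \<bullet> (Ki *v lv) - (lv \<bullet> (Ki *v one))\<^sup>2 / (one \<bullet> (Ki *v one))) = G"
    unfolding G_eq Let_def a_def b_def M_def K_def L_def one_def ..
  show ?thesis unfolding inactive supR Sexpr V_def uL ..
qed

end
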